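(* Let $N\in\mathbb N$ and let $X$ be a real Banach space of dimension $2^N+1$ with a dual skipped 1-unconditional basis $(f_k)_{k=1}^{2^N+1}$. Suppose $\mathrm{ubc}(f_1,f_{2^N+1})=\mu>1$. Then $\mathrm{ubc}(f_j)_{j=1}^{2^N+1}\ge1+2^N(\mu-1)$.
   Context: A basic sequence $(e_k)_{k=1}^N$ ($1\le N\le\infty$) is skipped $\lambda$-unconditional if whenever $0=m_0<m_1<\dots<m_n<\infty$ with $m_j-m_{j-1}\ge2$ for $1\le j\le n$, and $y_j\in[e_i]_{i=m_{j-1}+1}^{m_j-1}$ (spans taken only over indices $i\le N$), then $\|\sum_{j=1}^n\epsilon_jy_j\|\le\lambda\|\sum_{j=1}^ny_j\|$ for all signs $\epsilon_j=\pm1$. A basis $(f_k)_{k=1}^M$ of a finite-dimensional space $F$ is dual skipped $\lambda$-unconditional if its dual (biorthogonal) basis $(f_k^* )_{k=1}^M$ in $F^*$ is skipped $\lambda$-unconditional. For a finite linearly independent sequence $(f_j)_{j\in A}$, $\mathrm{ubc}(f_j)_{j\in A}$ is the least $K$ such that $\|\sum_{j\in A}\epsilon_ja_jf_j\|\le K\|\sum_{j\in A}a_jf_j\|$ for all scalars $a_j$ and signs $\epsilon_j=\pm1$. *)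

theory Defs
  imports "HOL-Analysis.Analysis"
begin

definition skipped_uncond :: "real \<Rightarrow> nat \<Rightarrow> (nat \<Rightarrow> 'b::real_normed_vector) \<Rightarrow> bool" where
  "skipped_uncond lam L e \<longleftrightarrow>
     (\<forall>(n::nat) (m::nat \<Rightarrow> nat) (y::nat \<Rightarrow> 'b) (eps::nat \<Rightarrow> real).
        m 0 = 0 \<and> (\<forall>j\<in>{1..n}. m (j - 1) + 2 \<le> m j)
        \<and> (\<forall>j\<in>{1..n}. y j \<in> span (e ` {i. m (j - 1) < i \<and> i < m j \<and> i \<le> L}))
        \<and> (\<forall>j. eps j \<in> {-1, 1})
        \<longrightarrow> norm (\<Sum>j=1..n. eps j *\<^sub>R y j) \<le> lam * norm (\<Sum>j=1..n. y j))"

definition ubc :: "(nat \<Rightarrow> 'a::real_normed_vector) \<Rightarrow> nat set \<Rightarrow> real" where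
  "ubc f A = Inf {K. \<forall>(a::nat \<Rightarrow> real) (eps::nat \<Rightarrow> real). (\<forall>j. eps j \<in> {-1, 1}) \<longrightarrow>
      norm (\<Sum>j\<in>A. (eps j * a j) *\<^sub>R f j) \<le> K * norm (\<Sum>j\<in>A. a j *\<^sub>R f j)}"

end

theory Submission
  imports Defs
begin



lemma lam_exists:
  fixes V :: "'a::real_vector set"
  assumes "subspace V" "b \<notin> V"
  shows "\<exists>l::'a\<Rightarrow>real. linear l \<and> (\<forall>v\<in>V. l v = 0) \<and> l b = 1"
proof -
  obtain B where B: "B \<subseteq> V" "independent B" "V \<subseteq> span B" "card B = dim V" by (rule basis_exists)
  have sV: "span B = V" by (rule subset_antisym[OF span_minimal[OF B(1) assms(1)] B(3)])
  have bB: "b \<notin> span B" using sV assms by simp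
  have ind: "independent (insert b B)" using B bB by (simp add: independent_insert)
  obtain g :: "'a \<Rightarrow> real" where g: "linear g" "\<forall>x\<in>insert b B. g x = (if x = b then 1 else 0)"
    using linear_independent_extend[OF ind, of "\<lambda>x. if x = b then 1 else 0"] by (elim exE) blast
  have "\<forall>v\<in>V. g v = 0"
  proof
    fix v assume "v \<in> V"
    have vB: "v \<in> span B" using sV \<open>v \<in> V\<close> by simp
    show "g v = 0"
    proof (rule linear_eq_0_on_span[OF g(1) _ vB])
      fix x assume "x \<in> B"
      then have "x \<noteq> b" using bB span_base by blast
      then show "g x = 0" using g(2) \<open>x \<in> B\<close> by simp
    qed
  qed
  moreover have "g b = 1" using g by simp
  ultimately show ?thesis using g by blast
qed

lemma hb_step:
  fixes V :: "'a::real_normed_vector set"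
  assumes V: "subspace V" and g: "linear g" and gle: "\<forall>v\<in>V. g v \<le> norm v" and b: "b \<notin> V"
  shows "\<exists>h. linear h \<and> (\<forall>v\<in>V. h v = g v) \<and> (\<forall>u\<in>span (insert b V). h u \<le> norm u)"
proof -
  obtain l :: "'a \<Rightarrow> real" where l: "linear l" "\<forall>v\<in>V. l v = 0" "l b = 1"
    using lam_exists[OF V b] by blast
  have key: "g w - norm (w - b) \<le> norm (w' + b) - g w'" if "w \<in> V" "w' \<in> V" for w w'
  proof -
    have "g w + g w' = g (w + w')" by (simp add: linear_add[OF g])
    also have "\<dots> \<le> norm (w + w')" using gle that V by (simp add: subspace_add)
    also have "\<dots> \<le> norm (w - b) + norm (w' + b)"
      using norm_triangle_ineq[of "w - b" "w' + b"] by simp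
    finally show ?thesis by simp
  qed
  define S where "S = {g w - norm (w - b) | w. w \<in> V}"
  define c where "c = Sup S"
  have S0: "S \<noteq> {}" using V subspace_0 S_def by blast
  have g0: "g 0 = 0" by (simp add: linear_0[OF g])
  have bdd: "bdd_above S"
  proof (rule bdd_aboveI)
    fix x assume "x \<in> S"
    then obtain w where w: "w \<in> V" "x = g w - norm (w - b)" unfolding S_def by blast
    have "g w - norm (w - b) \<le> norm (0 + b) - g 0" by (rule key[OF w(1) subspace_0[OF V]])
    then show "x \<le> norm b" using w g0 by simp
  qed
  have c_ge: "g w - norm (w - b) \<le> c" if "w \<in> V" for w
    unfolding c_def by (rule cSup_upper[OF _ bdd]) (use that S_def in blast)
  have c_le: "c \<le> norm (w' + b) - g w'" if "w' \<in> V" for w'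
    unfolding c_def
  proof (rule cSup_least[OF S0])
    fix x assume "x \<in> S"
    then obtain w where w: "w \<in> V" "x = g w - norm (w - b)" unfolding S_def by blast
    then show "x \<le> norm (w' + b) - g w'" using key[OF w(1) that] by simp
  qed
  define h where "h = (\<lambda>x. g x + (c - g b) * l x)"
  have lh: "linear h" unfolding h_def
    by (rule linearI) (simp_all add: linear_add[OF g] linear_add[OF l(1)] linear_scale[OF g] linear_scale[OF l(1)] algebra_simps)
  have hV: "\<forall>v\<in>V. h v = g v" using l by (simp add: h_def)
  have "h u \<le> norm u" if u: "u \<in> span (insert b V)" for u
  proof -
    obtain t where t: "u - t *\<^sub>R b \<in> span V" using u span_breakdown_eq by blast
    define v where "v = u - t *\<^sub>R b"
    have "span V = V" using V by (simp only: span_eq_iff)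
    then have vV: "v \<in> V" using t v_def by metis
    have u_eq: "u = v + t *\<^sub>R b" by (simp add: v_def)
    have hu: "h u = g v + t * c"
      using l vV by (simp add: h_def u_eq linear_add[OF g] linear_add[OF l(1)] linear_scale[OF g] linear_scale[OF l(1)] algebra_simps)
    show ?thesis
    proof (cases "t = 0")
      case True then show ?thesis using hu gle vV u_eq by simp
    next
      case False
      show ?thesis
      proof (cases "t > 0")
        case True
        have w: "(1/t) *\<^sub>R v \<in> V" using vV V by (simp add: subspace_scale)
        have "c \<le> norm ((1/t) *\<^sub>R v + b) - g ((1/t) *\<^sub>R v)" by (rule c_le[OF w])
        also have "norm ((1/t) *\<^sub>R v + b) = norm (v + t *\<^sub>R b) / t"
        proof -
          have "(1/t) *\<^sub>R v + b = (1/t) *\<^sub>R (v + t *\<^sub>R b)" using True by (simp add: algebra_simps)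
          then show ?thesis using True by simp
        qed
        also have "g ((1/t) *\<^sub>R v) = g v / t" by (simp add: linear_scale[OF g])
        finally have "c \<le> (norm (v + t *\<^sub>R b) - g v) / t" by (simp add: diff_divide_distrib)
        then have "t * c \<le> norm (v + t *\<^sub>R b) - g v" using True by (simp add: field_simps)
        then show ?thesis using hu u_eq by simp
      next
        case False
        with \<open>t \<noteq> 0\<close> have tn: "t < 0" by simp
        define s where "s = - t"
        have sp: "s > 0" using tn s_def by simp
        have w: "(1/s) *\<^sub>R v \<in> V" using vV V by (simp add: subspace_scale)
        have "g ((1/s) *\<^sub>R v) - norm ((1/s) *\<^sub>R v - b) \<le> c" by (rule c_ge[OF w])
        also have "norm ((1/s) *\<^sub>R v - b) = norm (v + t *\<^sub>R b) / s"
        proof -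
          have "(1/s) *\<^sub>R v - b = (1/s) *\<^sub>R (v + t *\<^sub>R b)" using sp s_def by (simp add: algebra_simps)
          then show ?thesis using sp by simp
        qed
        also have "g ((1/s) *\<^sub>R v) = g v / s" by (simp add: linear_scale[OF g])
        finally have "(g v - norm (v + t *\<^sub>R b)) / s \<le> c" by (simp add: diff_divide_distrib)
        then have "g v - norm (v + t *\<^sub>R b) \<le> s * c" using sp by (simp add: field_simps)
        then show ?thesis using hu u_eq s_def by simp
      qed
    qed
  qed
  then show ?thesis using lh hV by blast
qed

lemma span_span_Un: "span (span A \<union> B) = span (A \<union> B)"
proof (rule subset_antisym)
  have "span A \<union> B \<subseteq> span (A \<union> B)" using span_mono[of A "A \<union> B"] span_superset[of "A \<union> B"] by blast
  then show "span (span A \<union> B) \<subseteq> span (A \<union> B)" by (rule span_minimal) (rule subspace_span)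
next
  have "A \<union> B \<subseteq> span A \<union> B" using span_superset by blast
  then show "span (A \<union> B) \<subseteq> span (span A \<union> B)" by (rule span_mono)
qed

lemma hb_finite:
  fixes B :: "'a::real_normed_vector set"
  assumes "finite B"
  shows "\<And>V g. subspace V \<Longrightarrow> linear g \<Longrightarrow> \<forall>v\<in>V. g v \<le> norm v \<Longrightarrow>
     \<exists>h. linear h \<and> (\<forall>v\<in>V. h v = g v) \<and> (\<forall>u\<in>span (V \<union> B). h u \<le> norm u)"
  using assms
proof (induction B rule: finite_induct)
  case empty
  then have "span V = V" by (simp only: span_eq_iff)
  then show ?case using empty by (metis Un_empty_right)
next
  case (insert b B)
  obtain h1 where h1: "linear h1" "\<forall>v\<in>V. h1 v = g v" "\<forall>u\<in>span (insert b V). h1 u \<le> norm u"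
  proof (cases "b \<in> V")
    case True
    have "span V = V" using insert.prems by (simp only: span_eq_iff)
    then have "span (insert b V) = V" using True by (metis span_redundant)
    then show ?thesis using that insert.prems by auto
  next
    case False
    then show ?thesis using hb_step[OF insert.prems False] that by blast
  qed
  obtain h where h: "linear h" "\<forall>v\<in>span (insert b V). h v = h1 v" "\<forall>u\<in>span (span (insert b V) \<union> B). h u \<le> norm u"
    using insert.IH[OF subspace_span h1(1)] h1(3) by blast
  have "span (span (insert b V) \<union> B) = span (V \<union> insert b B)"
    unfolding span_span_Un by (metis Un_insert_left Un_insert_right)
  moreover have "\<forall>v\<in>V. h v = g v" using h(2) h1(2) by (simp add: span_base)
  ultimately show ?case using h by auto
qed




lemma dist_functional:
  fixes W F :: "'a::real_normed_vector set"
  assumes W: "subspace W" and F: "finite F" "span F = UNIV"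
  shows "\<exists>\<phi>. linear \<phi> \<and> (\<forall>w\<in>W. \<phi> w = 0) \<and> (\<forall>u. \<bar>\<phi> u\<bar> \<le> norm u)
     \<and> \<phi> v = Inf {norm (v + w) | w. w \<in> W}"
proof -
  define D where "D = {norm (v + w) | w. w \<in> W}"
  define d where "d = Inf D"
  have D0: "D \<noteq> {}" using W subspace_0 D_def by blast
  have Dbdd: "bdd_below D" unfolding D_def by (rule bdd_belowI[of _ 0]) auto
  have d0: "0 \<le> d" unfolding d_def by (rule cInf_greatest[OF D0]) (auto simp: D_def)
  have dle: "d \<le> norm (v + w)" if "w \<in> W" for w
    unfolding d_def by (rule cInf_lower[OF _ Dbdd]) (use that D_def in blast)
  have spW: "span W = W" using W by (simp only: span_eq_iff)
  obtain g :: "'a \<Rightarrow> real" where g: "linear g" "\<forall>w\<in>W. g w = 0" "g v = d"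
            "\<forall>u\<in>span (insert v W). g u \<le> norm u"
  proof (cases "v \<in> W")
    case True
    have "- v \<in> W" using True W by (simp add: subspace_neg)
    then have "d \<le> 0" using dle[of "-v"] by simp
    then have "d = 0" using d0 by simp
    then show ?thesis using that[of "\<lambda>_. 0"] by (simp add: linear_zero)
  next
    case False
    obtain l :: "'a \<Rightarrow> real" where l: "linear l" "\<forall>w\<in>W. l w = 0" "l v = 1"
      using lam_exists[OF W False] by blast
    define g where "g = (\<lambda>x. d * l x)"
    have lg: "linear g" unfolding g_def
      by (rule linearI) (simp_all add: linear_add[OF l(1)] linear_scale[OF l(1)] algebra_simps)
    have "g u \<le> norm u" if u: "u \<in> span (insert v W)" for u
    proof -
      obtain t where t: "u - t *\<^sub>R v \<in> span W" using u span_breakdown_eq by blast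
      define w where "w = u - t *\<^sub>R v"
      have wW: "w \<in> W" using t w_def spW by metis
      have u_eq: "u = w + t *\<^sub>R v" by (simp add: w_def)
      have gu: "g u = t * d"
        using l wW by (simp add: g_def u_eq linear_add[OF l(1)] linear_scale[OF l(1)])
      show ?thesis
      proof (cases "t > 0")
        case True
        have w': "(1/t) *\<^sub>R w \<in> W" using wW W by (simp add: subspace_scale)
        have "d \<le> norm (v + (1/t) *\<^sub>R w)" by (rule dle[OF w'])
        also have "v + (1/t) *\<^sub>R w = (1/t) *\<^sub>R u" using True by (simp add: u_eq algebra_simps)
        also have "norm \<dots> = norm u / t" using True by simp
        finally show ?thesis using True gu by (simp add: field_simps)
      next
        case False
        then have "t * d \<le> 0" using d0 by (simp add: mult_nonpos_nonneg)
        then show ?thesis using gu norm_ge_zero[of u] by linarith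
      qed
    qed
    then show ?thesis using that[of g] lg l by (simp add: g_def)
  qed
  obtain h where h: "linear h" "\<forall>x\<in>span (insert v W). h x = g x"
                    "\<forall>u\<in>span (span (insert v W) \<union> F). h u \<le> norm u"
    using hb_finite[OF F(1) subspace_span g(1)] g(4) by blast
  have "span (span (insert v W) \<union> F) = UNIV"
    using F(2) span_mono[of F "span (insert v W) \<union> F"] by auto
  then have hle: "h u \<le> norm u" for u using h(3) by blast
  have habs: "\<bar>h u\<bar> \<le> norm u" for u
    using hle[of u] hle[of "-u"] by (simp add: linear_neg[OF h(1)])
  have "\<forall>w\<in>W. h w = 0" using h(2) g(2) by (metis insert_iff span_base subsetD subset_insertI)
  moreover have "h v = d" using h(2) g(3) by (simp add: span_base)
  ultimately show ?thesis using h(1) habs d_def D_def by blast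
qed

lemma functional_blinfun:
  fixes h :: "'a::real_normed_vector \<Rightarrow> real"
  assumes "linear h" "\<forall>u. \<bar>h u\<bar> \<le> norm u"
  shows "bounded_linear h" "blinfun_apply (Blinfun h) = h" "norm (Blinfun h) \<le> 1"
proof -
  show bl: "bounded_linear h"
    by (rule bounded_linear_intro[where K=1]) (use assms in \<open>simp_all add: linear_add linear_scale\<close>)
  show ap: "blinfun_apply (Blinfun h) = h" by (rule bounded_linear_Blinfun_apply[OF bl])
  show "norm (Blinfun h) \<le> 1"
    by (rule norm_blinfun_bound) (use assms ap in simp_all)
qed




locale sk =
  fixes L :: nat and f :: "nat \<Rightarrow> 'a::real_normed_vector" and fs :: "nat \<Rightarrow> ('a \<Rightarrow>\<^sub>L real)"
  assumes inj: "inj_on f {1..L}" and spn: "span (f ` {1..L}) = UNIV"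
    and dual: "\<And>k j. k \<in> {1..L} \<Longrightarrow> j \<in> {1..L} \<Longrightarrow> blinfun_apply (fs k) (f j) = (if k = j then 1 else 0)"
begin

lemma coord_sum:
  assumes k: "k \<in> {1..L}"
  shows "fs k (\<Sum>i\<in>{1..L}. a i *\<^sub>R f i) = a k"
proof -
  have "fs k (\<Sum>i\<in>{1..L}. a i *\<^sub>R f i) = (\<Sum>i\<in>{1..L}. if k = i then a i else 0)"
    by (rule trans[OF blinfun.sum_right sum.cong]) (use k dual in \<open>auto simp: blinfun.scaleR_right\<close>)
  also have "\<dots> = a k" using k by (simp add: sum.delta)
  finally show ?thesis .
qed

lemma expansion: "z = (\<Sum>i\<in>{1..L}. fs i z *\<^sub>R f i)"
proof -
  have "z \<in> span (f ` {1..L})" using spn by simp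
  then obtain u where u: "z = (\<Sum>v\<in>f ` {1..L}. u v *\<^sub>R v)"
    using span_finite[of "f ` {1..L}"] by auto
  also have "\<dots> = (\<Sum>i\<in>{1..L}. u (f i) *\<^sub>R f i)"
    using sum.reindex[OF inj, of "\<lambda>v. u v *\<^sub>R v"] by simp
  finally have z: "z = (\<Sum>i\<in>{1..L}. u (f i) *\<^sub>R f i)" .
  have "fs i z = u (f i)" if "i \<in> {1..L}" for i
    using coord_sum[OF that, of "\<lambda>i. u (f i)"] z by simp
  then show ?thesis using z by (metis (no_types, lifting) sum.cong)
qed

lemma coord_eq:
  assumes "\<And>i. i \<in> {1..L} \<Longrightarrow> fs i x = fs i y"
  shows "x = y"
  using expansion[of x] expansion[of y] assms by (metis (no_types, lifting) sum.cong)

lemma coord_zero_span: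
  assumes i: "i \<in> {1..L}" and G: "G \<subseteq> {1..L}" "i \<notin> G" and w: "w \<in> span (f ` G)"
  shows "fs i w = 0"
proof (rule linear_eq_0_on_span[OF _ _ w])
  show "linear (blinfun_apply (fs i))" by (rule bounded_linear.linear[OF blinfun.bounded_linear_right])
  fix x assume "x \<in> f ` G"
  then obtain g where g: "g \<in> G" "x = f g" by blast
  then show "fs i x = 0" using dual[OF i, of g] G i by auto
qed

end



context sk begin

lemma lemmaA:
  fixes m :: "nat \<Rightarrow> nat" and n :: nat and eps :: "nat \<Rightarrow> real" and \<delta> :: real
  assumes skip: "skipped_uncond 1 L fs" and m0: "m 0 = 0"
    and mgap: "\<forall>j\<in>{1..n}. m (j - 1) + 2 \<le> m j"
    and eps: "\<forall>j. eps j \<in> {-1, 1}" and dp: "\<delta> > 0"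
  shows "\<exists>z'. norm z' \<le> norm z + \<delta> \<and>
     (\<forall>j\<in>{1..n}. \<forall>i. m (j - 1) < i \<and> i < m j \<and> i \<le> L \<longrightarrow> fs i z' = eps j * fs i z)"
proof -
  define Bl where "Bl j = {i. m (j - 1) < i \<and> i < m j \<and> i \<le> L}" for j
  have mono: "k \<le> n \<longrightarrow> m j \<le> m k" if "j \<le> k" for j k :: nat
    using that
  proof (induction k rule: dec_induct)
    case base then show ?case by simp
  next
    case (step k)
    show ?case
    proof
      assume "Suc k \<le> n"
      then have "Suc k \<in> {1..n}" by simp
      then have "m (Suc k - 1) + 2 \<le> m (Suc k)" using mgap by blast
      then show "m j \<le> m (Suc k)" using step \<open>Suc k \<le> n\<close> by simp
    qed
  qed
  have disj: "i \<notin> Bl j'" if "j \<in> {1..n}" "j' \<in> {1..n}" "j \<noteq> j'" "i \<in> Bl j" for i j j'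
  proof
    assume i': "i \<in> Bl j'"
    show False
    proof (cases "j < j'")
      case True
      then have "m j \<le> m (j' - 1)" using mono[of j "j' - 1"] that by auto
      then show False using that(4) i' by (auto simp: Bl_def)
    next
      case False
      then have "m j' \<le> m (j - 1)" using mono[of j' "j - 1"] that by auto
      then show False using that(4) i' by (auto simp: Bl_def)
    qed
  qed
  have pick: "(\<Sum>j\<in>{1..n}. if i \<in> Bl j then a j else 0) = a j0"
    if "j0 \<in> {1..n}" "i \<in> Bl j0" for i j0 and a :: "nat \<Rightarrow> real"
  proof -
    have "(\<Sum>j\<in>{1..n}. if i \<in> Bl j then a j else 0) = (\<Sum>j\<in>{1..n}. if j = j0 then a j else 0)"
      by (rule sum.cong) (use disj that in auto)
    also have "\<dots> = a j0" using that(1) by (simp add: sum.delta)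
    finally show ?thesis .
  qed
  have BlL: "Bl j \<subseteq> {1..L}" for j by (auto simp: Bl_def)
  define U where "U = (\<Union>j\<in>{1..n}. Bl j)"
  define Gp where "Gp = {1..L} - U"
  define W where "W = span (f ` Gp)"
  define \<sigma> where "\<sigma> i = (\<Sum>j\<in>{1..n}. if i \<in> Bl j then eps j else 0)" for i
  define v where "v = (\<Sum>i\<in>{1..L}. (\<sigma> i * fs i z) *\<^sub>R f i)"
  obtain \<phi> where \<phi>: "linear \<phi>" "\<forall>w\<in>W. \<phi> w = 0" "\<forall>u. \<bar>\<phi> u\<bar> \<le> norm u"
      "\<phi> v = Inf {norm (v + w) | w. w \<in> W}"
    using dist_functional[OF subspace_span[of "f ` Gp"] _ spn, of v] unfolding W_def by auto
  note \<phi>b = functional_blinfun[OF \<phi>(1) \<phi>(3)]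
  define y where "y j = (\<Sum>i\<in>Bl j. \<phi> (f i) *\<^sub>R fs i)" for j
  have yspan: "y j \<in> span (fs ` Bl j)" for j
    unfolding y_def by (intro span_sum span_scale span_base) auto
  have swap: "(\<Sum>j\<in>{1..n}. \<Sum>i\<in>Bl j. F j i) = (\<Sum>i\<in>{1..L}. \<Sum>j\<in>{1..n}. if i \<in> Bl j then F j i else 0)"
    for F :: "nat \<Rightarrow> nat \<Rightarrow> real"
  proof -
    have "(\<Sum>j\<in>{1..n}. \<Sum>i\<in>Bl j. F j i) = (\<Sum>j\<in>{1..n}. \<Sum>i\<in>{1..L}. if i \<in> Bl j then F j i else 0)"
    proof (rule sum.cong[OF refl])
      fix j
      have "Bl j = {1..L} \<inter> Bl j" using BlL by blast
      then show "(\<Sum>i\<in>Bl j. F j i) = (\<Sum>i\<in>{1..L}. if i \<in> Bl j then F j i else 0)"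
        by (metis finite_atLeastAtMost sum.inter_restrict)
    qed
    also have "\<dots> = (\<Sum>i\<in>{1..L}. \<Sum>j\<in>{1..n}. if i \<in> Bl j then F j i else 0)" by (rule sum.swap)
    finally show ?thesis .
  qed
  have phiGp: "\<phi> (f i) = 0" if "i \<in> {1..L}" "i \<notin> U" for i
    using \<phi>(2) that unfolding W_def Gp_def by (simp add: span_base)
  have sumy: "(\<Sum>j=1..n. y j) = Blinfun \<phi>"
  proof (rule blinfun_eqI)
    fix u
    have "blinfun_apply (\<Sum>j=1..n. y j) u = (\<Sum>j\<in>{1..n}. \<Sum>i\<in>Bl j. \<phi> (f i) * fs i u)"
      by (simp add: y_def blinfun.sum_left blinfun.scaleR_left)
    also have "\<dots> = (\<Sum>i\<in>{1..L}. \<Sum>j\<in>{1..n}. if i \<in> Bl j then \<phi> (f i) * fs i u else 0)"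
      by (rule swap)
    also have "\<dots> = (\<Sum>i\<in>{1..L}. fs i u * \<phi> (f i))"
    proof (rule sum.cong[OF refl])
      fix i assume i: "i \<in> {1..L}"
      show "(\<Sum>j\<in>{1..n}. if i \<in> Bl j then \<phi> (f i) * fs i u else 0) = fs i u * \<phi> (f i)"
      proof (cases "i \<in> U")
        case True
        then obtain j0 where "j0 \<in> {1..n}" "i \<in> Bl j0" unfolding U_def by blast
        then show ?thesis using pick[of j0 i "\<lambda>_. \<phi> (f i) * fs i u"] by simp
      next
        case False
        then have "i \<notin> Bl j" if "j \<in> {1..n}" for j using that U_def by blast
        then show ?thesis using phiGp[OF i False] by simp
      qed
    qed
    also have "\<dots> = \<phi> (\<Sum>i\<in>{1..L}. fs i u *\<^sub>R f i)"
      by (simp add: linear_sum[OF \<phi>(1)] linear_scale[OF \<phi>(1)])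
    also have "\<dots> = \<phi> u" using expansion[of u] by simp
    finally show "blinfun_apply (\<Sum>j=1..n. y j) u = blinfun_apply (Blinfun \<phi>) u" using \<phi>b(2) by simp
  qed
  have sumey: "blinfun_apply (\<Sum>j=1..n. eps j *\<^sub>R y j) z = \<phi> v"
  proof -
    have "blinfun_apply (\<Sum>j=1..n. eps j *\<^sub>R y j) z = (\<Sum>j\<in>{1..n}. \<Sum>i\<in>Bl j. eps j * (\<phi> (f i) * fs i z))"
      by (simp add: y_def blinfun.sum_left blinfun.scaleR_left sum_distrib_left)
    also have "\<dots> = (\<Sum>i\<in>{1..L}. \<Sum>j\<in>{1..n}. if i \<in> Bl j then eps j * (\<phi> (f i) * fs i z) else 0)"
      by (rule swap)
    also have "\<dots> = (\<Sum>i\<in>{1..L}. (\<sigma> i * fs i z) * \<phi> (f i))"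
    proof (rule sum.cong[OF refl])
      fix i
      have "(\<Sum>j\<in>{1..n}. if i \<in> Bl j then eps j * (\<phi> (f i) * fs i z) else 0)
           = (\<Sum>j\<in>{1..n}. (if i \<in> Bl j then eps j else 0) * (\<phi> (f i) * fs i z))"
        by (rule sum.cong) auto
      also have "\<dots> = \<sigma> i * (\<phi> (f i) * fs i z)" unfolding \<sigma>_def by (simp add: sum_distrib_right)
      finally show "(\<Sum>j\<in>{1..n}. if i \<in> Bl j then eps j * (\<phi> (f i) * fs i z) else 0) = (\<sigma> i * fs i z) * \<phi> (f i)"
        by simp
    qed
    also have "\<dots> = \<phi> v" unfolding v_def by (simp add: linear_sum[OF \<phi>(1)] linear_scale[OF \<phi>(1)])
    finally show ?thesis .
  qed
  have ymem: "\<forall>j\<in>{1..n}. y j \<in> span (fs ` {i. m (j - 1) < i \<and> i < m j \<and> i \<le> L})"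
    using yspan unfolding Bl_def by blast
  have "norm (\<Sum>j=1..n. eps j *\<^sub>R y j) \<le> 1 * norm (\<Sum>j=1..n. y j)"
    using skip m0 mgap ymem eps unfolding skipped_uncond_def by blast
  then have ney: "norm (\<Sum>j=1..n. eps j *\<^sub>R y j) \<le> 1" using sumy \<phi>b(3) by simp
  have "\<phi> v \<le> norm (blinfun_apply (\<Sum>j=1..n. eps j *\<^sub>R y j) z)" using sumey by simp
  also have "\<dots> \<le> norm (\<Sum>j=1..n. eps j *\<^sub>R y j) * norm z" by (rule norm_blinfun)
  also have "\<dots> \<le> norm z" using ney by (simp add: mult_left_le_one_le)
  finally have phiv: "\<phi> v \<le> norm z" .
  obtain w where wW: "w \<in> W" and wn: "norm (v + w) < norm z + \<delta>"
  proof (rule ccontr)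
    assume "\<not> thesis"
    then have "\<forall>w\<in>W. norm z + \<delta> \<le> norm (v + w)" using that by force
    then have "norm z + \<delta> \<le> Inf {norm (v + w) | w. w \<in> W}"
      by (intro cInf_greatest) (auto intro: subspace_0 simp: W_def)
    then show False using phiv \<phi>(4) dp by simp
  qed
  have "fs i (v + w) = eps j * fs i z" if j: "j \<in> {1..n}" and i: "m (j - 1) < i" "i < m j" "i \<le> L" for i j
  proof -
    have iB: "i \<in> Bl j" using i by (simp add: Bl_def)
    have iL: "i \<in> {1..L}" using iB BlL by blast
    have "i \<in> U" using iB j U_def by blast
    then have "fs i w = 0"
      using coord_zero_span[OF iL _ _ wW[unfolded W_def], of] Gp_def by auto
    moreover have "fs i v = \<sigma> i * fs i z" unfolding v_def by (rule coord_sum[OF iL])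
    moreover have "\<sigma> i = eps j" unfolding \<sigma>_def by (rule pick[OF j iB])
    ultimately show ?thesis by (simp add: blinfun.add_right)
  qed
  then show ?thesis using wn by (intro exI[of _ "v + w"]) auto
qed

end



lemma blk_arith:
  fixes h p q r :: nat
  assumes h: "h > 0" and pq: "p = 2*h*q + r" and r: "r < 2*h"
  shows "r < h \<Longrightarrow> (if q = 0 then 0 else 1 + (2*q - 1)*h) < p + 1 \<and> p + 1 < 1 + (2*(q+1) - 1)*h"
    and "h < r \<Longrightarrow> 1 + (2*(q+1) - 1)*h < p + 1 \<and> p + 1 < 1 + (2*(q+2) - 1)*h"
proof -
  have e1: "(2*(q+1) - 1)*h = 2*h*q + h" by (simp add: algebra_simps)
  have e2: "(2*(q+2) - 1)*h = 2*h*q + 3*h" by (simp add: algebra_simps)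
  show "r < h \<Longrightarrow> (if q = 0 then 0 else 1 + (2*q - 1)*h) < p + 1 \<and> p + 1 < 1 + (2*(q+1) - 1)*h"
  proof -
    assume rh: "r < h"
    have "(if q = 0 then 0 else 1 + (2*q - 1)*h) < p + 1"
    proof (cases "q = 0")
      case False
      then have "(2*q - 1)*h + h = 2*h*q" by (simp add: algebra_simps diff_mult_distrib)
      then show ?thesis using False pq h by simp
    qed simp
    then show ?thesis using e1 pq rh by simp
  qed
  show "h < r \<Longrightarrow> 1 + (2*(q+1) - 1)*h < p + 1 \<and> p + 1 < 1 + (2*(q+2) - 1)*h"
    using e1 e2 pq r by simp
qed

lemma mod_facts:
  fixes h p :: nat
  assumes h: "h > 0"
  shows "p mod (2*h) = h \<Longrightarrow> \<not> (2*h) dvd p"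
    and "\<not> h dvd p \<Longrightarrow> p mod (2*h) \<noteq> h \<and> p mod (2*h) \<noteq> 0"
    and "(2*h) dvd p \<Longrightarrow> (p mod (2*h*2) = 2*h \<longleftrightarrow> odd (p div (2*h)))"
    and "p mod (2*h) = 0 \<Longrightarrow> (2*h) dvd p"
proof -
  show "p mod (2*h) = h \<Longrightarrow> \<not> (2*h) dvd p" using h by (metis dvd_imp_mod_0 less_irrefl)
  show "\<not> h dvd p \<Longrightarrow> p mod (2*h) \<noteq> h \<and> p mod (2*h) \<noteq> 0"
  proof -
    assume nd: "\<not> h dvd p"
    have pe: "p = 2*h*(p div (2*h)) + p mod (2*h)" by simp
    have "p mod (2*h) \<noteq> h"
    proof
      assume "p mod (2*h) = h"
      then have "p = h * (2 * (p div (2*h)) + 1)" using pe by (simp add: algebra_simps)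
      then show False using nd by (metis dvd_triv_left)
    qed
    moreover have "p mod (2*h) \<noteq> 0"
    proof
      assume "p mod (2*h) = 0"
      then have "p = h * (2 * (p div (2*h)))" using pe by (simp add: algebra_simps)
      then show False using nd by (metis dvd_triv_left)
    qed
    ultimately show ?thesis by blast
  qed
  show "(2*h) dvd p \<Longrightarrow> (p mod (2*h*2) = 2*h \<longleftrightarrow> odd (p div (2*h)))"
  proof -
    assume d: "(2*h) dvd p"
    have "p mod (2*h*2) = 2*h * (p div (2*h) mod 2) + p mod (2*h)" by (rule mod_mult2_eq)
    also have "p mod (2*h) = 0" using d by simp
    finally have "p mod (2*h*2) = 2*h * (p div (2*h) mod 2)" by simp
    then show ?thesis using h by (cases "even (p div (2*h))") (auto simp: odd_iff_mod_2_eq_one)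
  qed
  show "p mod (2*h) = 0 \<Longrightarrow> (2*h) dvd p" by auto
qed




context sk begin

definition flip where "flip G z = (\<Sum>i\<in>{1..L}. ((if i \<in> G then -1 else 1) * fs i z) *\<^sub>R f i)"

lemma fs_flip: "i \<in> {1..L} \<Longrightarrow> fs i (flip G z) = (if i \<in> G then -1 else 1) * fs i z"
  unfolding flip_def by (rule coord_sum)

lemma eps_lemma:
  assumes "\<And>e. e > 0 \<Longrightarrow> x \<le> a * (y + e)" and "a > 0"
  shows "x \<le> a * (y::real)"
proof (rule field_le_epsilon)
  fix e :: real assume e: "e > 0"
  have "x \<le> a * (y + e / a)" using assms e by simp
  also have "\<dots> = a * y + e" using assms(2) by (simp add: field_simps)
  finally show "x \<le> a * y + e" .
qed

lemma Bk:
  assumes skip: "skipped_uncond 1 L fs" and HK: "\<forall>G z. norm (flip G z) \<le> K * norm z" and K1: "K \<ge> 1"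
  shows "(\<forall>i\<in>{1..L}. \<not> 2^k dvd (i-1) \<longrightarrow> fs i z = 0) \<Longrightarrow>
     norm (flip {i. (i-1) mod 2^(k+1) = 2^k} z) \<le> (1 + (K-1)/2^k) * norm z"
proof (induction k arbitrary: z)
  case 0
  then show ?case using HK by simp
next
  case (Suc k)
  define h :: nat where "h = 2^k"
  have h0: "h > 0" by (simp add: h_def)
  define c where "c = 1 + (K-1)/2^k"
  have c1: "c \<ge> 1" using K1 by (simp add: c_def)
  define G0 where "G0 = {i. (i-1) mod (2*h) = h}"
  define G1 where "G1 = {i. (i-1) mod (2*h*2) = 2*h}"
  have G0e: "{i. (i-1) mod 2^(k+1) = 2^k} = G0" by (simp add: G0_def h_def mult.commute)
  have G1e: "{i. (i-1) mod 2^(Suc k + 1) = 2^Suc k} = G1" by (simp add: G1_def h_def mult.commute)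
  have supp: "\<forall>i\<in>{1..L}. \<not> (2*h) dvd (i-1) \<longrightarrow> fs i z = 0" using Suc.prems by (simp add: h_def)
  define m where "m = (\<lambda>j::nat. if j = 0 then 0 else 1 + (2*j - 1)*h)"
  define n where "n = L + 2"
  define eps where "eps = (\<lambda>j::nat. if odd (j - 1) then -1 else (1::real))"
  have m0: "m 0 = 0" by (simp add: m_def)
  have mgap: "\<forall>j\<in>{1..n}. m (j - 1) + 2 \<le> m j"
  proof
    fix j assume "j \<in> {1..n}"
    then have "j \<ge> 1" by simp
    show "m (j - 1) + 2 \<le> m j"
    proof (cases "j = 1")
      case True then show ?thesis using h0 by (simp add: m_def)
    next
      case False
      then obtain t where t: "j = Suc (Suc t)" using \<open>j \<ge> 1\<close> by (metis One_nat_def Suc_le_D not0_implies_Suc Suc_inject le_zero_eq)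
      have "(2 * Suc t - 1) * h + 2 \<le> (2 * Suc (Suc t) - 1) * h" using h0 by (simp add: algebra_simps)
      then show ?thesis using t by (simp add: m_def)
    qed
  qed
  have epsv: "\<forall>j. eps j \<in> {-1, 1}" by (simp add: eps_def)
  have blocks: "\<exists>j\<in>{1..n}. m (j - 1) < i \<and> i < m j \<and> ((i-1) mod (2*h) = 0 \<longrightarrow> j = (i-1) div (2*h) + 1)"
    if i: "i \<in> {1..L}" and r: "(i-1) mod (2*h) \<noteq> h" for i
  proof -
    define p where "p = i - 1"
    define q where "q = p div (2*h)"
    define rr where "rr = p mod (2*h)"
    have pq: "p = 2*h*q + rr" by (simp add: q_def rr_def)
    have rr2: "rr < 2*h" using h0 by (simp add: rr_def)
    have ip: "i = p + 1" using i by (simp add: p_def)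
    have "q \<le> p" unfolding q_def by (rule div_le_dividend)
    then have qL: "q \<le> L" using i p_def by auto
    have qd: "(i-1) div (2*h) = q" by (simp add: q_def p_def)
    have rd: "(i-1) mod (2*h) = rr" by (simp add: rr_def p_def)
    have mq: "m q = (if q = 0 then 0 else 1 + (2*q - 1)*h)" by (simp add: m_def)
    have mq1: "m (q+1) = 1 + (2*(q+1) - 1)*h" by (simp add: m_def)
    have mq2: "m (q+2) = 1 + (2*(q+2) - 1)*h" by (simp add: m_def)
    show ?thesis
    proof (cases "rr < h")
      case True
      note B = blk_arith(1)[OF h0 pq rr2 True]
      show ?thesis
      proof (rule bexI[of _ "q+1"])
        show "q + 1 \<in> {1..n}" using qL by (simp add: n_def)
        show "m (q + 1 - 1) < i \<and> i < m (q + 1) \<and> ((i - 1) mod (2 * h) = 0 \<longrightarrow> q + 1 = (i - 1) div (2 * h) + 1)"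
          using B ip mq mq1 qd by simp
      qed
    next
      case False
      then have "h < rr" using r rd by simp
      note B = blk_arith(2)[OF h0 pq rr2 this]
      have "rr \<noteq> 0" using \<open>h < rr\<close> by simp
      show ?thesis
      proof (rule bexI[of _ "q+2"])
        show "q + 2 \<in> {1..n}" using qL by (simp add: n_def)
        show "m (q + 2 - 1) < i \<and> i < m (q + 2) \<and> ((i - 1) mod (2 * h) = 0 \<longrightarrow> q + 2 = (i - 1) div (2 * h) + 1)"
          using B ip mq1 mq2 rd \<open>rr \<noteq> 0\<close> by simp
      qed
    qed
  qed
  have main: "norm (flip G1 z) \<le> ((1 + c)/2) * (norm z + \<delta>)" if dp: "\<delta> > 0" for \<delta>
  proof -
    obtain z' where z'n: "norm z' \<le> norm z + \<delta>" and
      z'c: "\<forall>j\<in>{1..n}. \<forall>i. m (j - 1) < i \<and> i < m j \<and> i \<le> L \<longrightarrow> fs i z' = eps j * fs i z"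
      using lemmaA[OF skip m0 mgap epsv dp, of z] by blast
    have supp': "\<forall>i\<in>{1..L}. \<not> 2^k dvd (i-1) \<longrightarrow> fs i z' = 0"
    proof (intro ballI impI)
      fix i assume i: "i \<in> {1..L}" and nd: "\<not> 2^k dvd (i-1)"
      have nd': "\<not> h dvd (i-1)" using nd by (simp add: h_def)
      note mf = mod_facts(2)[OF h0 nd']
      obtain j where j1: "j \<in> {1..n}"
          and jall: "m (j - 1) < i \<and> i < m j \<and> ((i-1) mod (2*h) = 0 \<longrightarrow> j = (i-1) div (2*h) + 1)"
          using blocks[OF i conjunct1[OF mf]] by (rule bexE)
      have j: "j \<in> {1..n}" "m (j - 1) < i" "i < m j" using j1 jall by auto
      have "\<not> (2*h) dvd (i-1)" using nd' dvd_mult_right by (metis mult.commute)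
      then have "fs i z = 0" using supp i by blast
      then show "fs i z' = 0" using z'c j i by simp
    qed
    have IH: "norm (flip G0 z') \<le> c * norm z'"
      using Suc.IH[OF supp'] G0e by (simp add: c_def)
    have weq: "flip G1 z = (1/2) *\<^sub>R (z' + flip G0 z')"
    proof (rule coord_eq)
      fix i assume i: "i \<in> {1..L}"
      have R: "fs i ((1/2) *\<^sub>R (z' + flip G0 z')) = (1/2) * (fs i z' + (if i \<in> G0 then -1 else 1) * fs i z')"
        using fs_flip[OF i] by (simp add: blinfun.scaleR_right blinfun.add_right)
      show "fs i (flip G1 z) = fs i ((1/2) *\<^sub>R (z' + flip G0 z'))"
      proof (cases "i \<in> G0")
        case True
        then have "(i-1) mod (2*h) = h" by (simp add: G0_def)
        then have "\<not> (2*h) dvd (i-1)" using mod_facts(1)[OF h0] by blast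
        then have "fs i z = 0" using supp i by blast
        then show ?thesis using R True fs_flip[OF i] by simp
      next
        case False
        then have r: "(i-1) mod (2*h) \<noteq> h" by (simp add: G0_def)
        obtain j where j1: "j \<in> {1..n}"
          and jall: "m (j - 1) < i \<and> i < m j \<and> ((i-1) mod (2*h) = 0 \<longrightarrow> j = (i-1) div (2*h) + 1)"
          using blocks[OF i r] by (rule bexE)
        have j: "j \<in> {1..n}" "m (j - 1) < i" "i < m j" using j1 jall by auto
        have jq: "(i-1) mod (2*h) = 0 \<longrightarrow> j = (i-1) div (2*h) + 1" by (rule conjunct2[OF conjunct2[OF jall]])
        have z'i: "fs i z' = eps j * fs i z" using z'c j i by simp
        show ?thesis
        proof (cases "(2*h) dvd (i-1)")
          case True
          then have "(i-1) mod (2*h) = 0" by simp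
          then have jj: "j = (i-1) div (2*h) + 1" using jq by simp
          have "i \<in> G1 \<longleftrightarrow> odd ((i-1) div (2*h))"
            using mod_facts(3)[OF h0 True] by (simp add: G1_def)
          then have "(if i \<in> G1 then -1 else 1) = eps j" by (simp add: eps_def jj)
          then show ?thesis using R False fs_flip[OF i] z'i by simp
        next
          case False
          then have "fs i z = 0" using supp i by blast
          then show ?thesis using R \<open>i \<notin> G0\<close> fs_flip[OF i] z'i by simp
        qed
      qed
    qed
    have "norm (flip G1 z) = (1/2) * norm (z' + flip G0 z')" using weq by simp
    also have "\<dots> \<le> (1/2) * (norm z' + c * norm z')"
      using norm_triangle_ineq[of z' "flip G0 z'"] IH by simp
    also have "\<dots> = ((1 + c)/2) * norm z'" by (simp add: algebra_simps)
    also have "\<dots> \<le> ((1 + c)/2) * (norm z + \<delta>)" using z'n c1 by (intro mult_left_mono) auto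
    finally show ?thesis .
  qed
  have "norm (flip G1 z) \<le> ((1 + c)/2) * norm z"
    by (rule eps_lemma[OF main]) (use c1 in auto)
  moreover have "(1 + c)/2 = 1 + (K-1)/2^Suc k" by (simp add: c_def field_simps)
  ultimately show ?case using G1e by simp
qed

end



theorem lemma5p3:
  fixes N :: nat and \<mu> :: real
    and f :: "nat \<Rightarrow> 'a::{real_normed_vector, banach}"
    and fs :: "nat \<Rightarrow> ('a \<Rightarrow>\<^sub>L real)"
  assumes basis_inj: "inj_on f {1..2^N+1}"
    and basis_indep: "independent (f ` {1..2^N+1})"
    and basis_span: "span (f ` {1..2^N+1}) = UNIV"
    and dual: "\<And>k j. k \<in> {1..2^N+1} \<Longrightarrow> j \<in> {1..2^N+1} \<Longrightarrow>
                  blinfun_apply (fs k) (f j) = (if k = j then 1 else 0)"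
    and dual_skipped: "skipped_uncond 1 (2^N+1) fs"
    and mu: "ubc f {1, 2^N+1} = \<mu>"
    and mu_gt: "\<mu> > 1"
  shows "ubc f {1..2^N+1} \<ge> 1 + 2^N * (\<mu> - 1)"
proof -
  define L :: nat where "L = 2^N + 1"
  interpret sk L f fs
  proof unfold_locales
    show "inj_on f {1..L}" using basis_inj by (simp add: L_def)
    show "span (f ` {1..L}) = UNIV" using basis_span by (simp add: L_def)
    show "blinfun_apply (fs k) (f j) = (if k = j then 1 else 0)" if "k \<in> {1..L}" "j \<in> {1..L}" for k j
      using dual that by (simp add: L_def)
  qed
  have skip: "skipped_uncond 1 L fs" using dual_skipped by (simp add: L_def)
  have L1: "1 < L" by (simp add: L_def)
  have f1: "f 1 \<noteq> 0"
  proof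
    assume "f 1 = 0"
    moreover have "fs 1 (f 1) = 1" using dual[of 1 1] L1 by simp
    ultimately show False by simp
  qed
  define S where "S = {K. \<forall>(a::nat \<Rightarrow> real) (eps::nat \<Rightarrow> real). (\<forall>j. eps j \<in> {-1, 1}) \<longrightarrow>
      norm (\<Sum>j\<in>{1..L}. (eps j * a j) *\<^sub>R f j) \<le> K * norm (\<Sum>j\<in>{1..L}. a j *\<^sub>R f j)}"
  define S2 where "S2 = {K. \<forall>(a::nat \<Rightarrow> real) (eps::nat \<Rightarrow> real). (\<forall>j. eps j \<in> {-1, 1}) \<longrightarrow>
      norm (\<Sum>j\<in>{1, L}. (eps j * a j) *\<^sub>R f j) \<le> K * norm (\<Sum>j\<in>{1, L}. a j *\<^sub>R f j)}"
  have ubcS: "ubc f {1..L} = Inf S" unfolding ubc_def S_def ..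
  have ubcS2: "ubc f {1, L} = Inf S2" unfolding ubc_def S2_def ..
  have muS2: "\<mu> = Inf S2" using mu ubcS2 by (simp add: L_def)
  define ind where "ind = (\<lambda>j::nat. if j = 1 then 1 else (0::real))"
  have ind1: "(\<Sum>j\<in>{1..L}. ind j *\<^sub>R f j) = f 1"
  proof -
    have "(\<Sum>j\<in>{1..L}. ind j *\<^sub>R f j) = (\<Sum>j\<in>{1..L}. if j = 1 then f j else 0)"
      by (rule sum.cong) (auto simp: ind_def)
    then show ?thesis using L1 by (simp add: sum.delta)
  qed
  have ind2: "(\<Sum>j\<in>{1, L}. ind j *\<^sub>R f j) = f 1" using L1 by (simp add: ind_def)
  have S_ge1: "K \<ge> 1" if "K \<in> S" for K
  proof -
    have "norm (\<Sum>j\<in>{1..L}. (1 * ind j) *\<^sub>R f j) \<le> K * norm (\<Sum>j\<in>{1..L}. ind j *\<^sub>R f j)"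
      using that unfolding S_def mem_Collect_eq
      by (elim allE[of _ ind] allE[of _ "\<lambda>_. 1"]) simp
    then have "norm (f 1) \<le> K * norm (f 1)" using ind1 by simp
    then show ?thesis using f1 by simp
  qed
  have S2_ge1: "K \<ge> 1" if "K \<in> S2" for K
  proof -
    have "norm (\<Sum>j\<in>{1, L}. (1 * ind j) *\<^sub>R f j) \<le> K * norm (\<Sum>j\<in>{1, L}. ind j *\<^sub>R f j)"
      using that unfolding S2_def mem_Collect_eq
      by (elim allE[of _ ind] allE[of _ "\<lambda>_. 1"]) simp
    then have "norm (f 1) \<le> K * norm (f 1)" using ind2 by simp
    then show ?thesis using f1 by simp
  qed
  have S_ne: "S \<noteq> {}"
  proof -
    define K0 where "K0 = (\<Sum>j\<in>{1..L}. norm (fs j) * norm (f j))"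
    have "K0 \<in> S" unfolding S_def
    proof (intro CollectI allI impI)
      fix a eps :: "nat \<Rightarrow> real" assume eps: "\<forall>j. eps j \<in> {-1, 1}"
      define x where "x = (\<Sum>j\<in>{1..L}. a j *\<^sub>R f j)"
      have ax: "a j = fs j x" if "j \<in> {1..L}" for j using coord_sum[OF that] x_def by simp
      have "norm (\<Sum>j\<in>{1..L}. (eps j * a j) *\<^sub>R f j) \<le> (\<Sum>j\<in>{1..L}. norm ((eps j * a j) *\<^sub>R f j))"
        by (rule norm_sum)
      also have "\<dots> = (\<Sum>j\<in>{1..L}. \<bar>fs j x\<bar> * norm (f j))"
      proof (rule sum.cong[OF refl])
        fix j assume j: "j \<in> {1..L}"
        have "\<bar>eps j\<bar> = 1" using eps by (metis abs_minus_cancel abs_one insertE singletonD)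
        then show "norm ((eps j * a j) *\<^sub>R f j) = \<bar>fs j x\<bar> * norm (f j)" using ax[OF j] by (simp add: abs_mult)
      qed
      also have "\<dots> \<le> (\<Sum>j\<in>{1..L}. (norm (fs j) * norm x) * norm (f j))"
      proof (intro sum_mono mult_right_mono)
        fix j show "\<bar>fs j x\<bar> \<le> norm (fs j) * norm x" using norm_blinfun[of "fs j" x] by simp
      qed simp
      also have "\<dots> = K0 * norm x" unfolding K0_def sum_distrib_right by (rule sum.cong) (auto simp: algebra_simps)
      finally show "norm (\<Sum>j\<in>{1..L}. (eps j * a j) *\<^sub>R f j) \<le> K0 * norm (\<Sum>j\<in>{1..L}. a j *\<^sub>R f j)"
        by (simp add: x_def)
    qed
    then show ?thesis by blast
  qed
  have main: "1 + 2^N * (\<mu> - 1) \<le> K" if KS: "K \<in> S" for K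
  proof -
    have K1: "K \<ge> 1" using S_ge1[OF KS] .
    have HK: "\<forall>G z. norm (flip G z) \<le> K * norm z"
    proof (intro allI)
      fix G z
      have "norm (\<Sum>j\<in>{1..L}. ((\<lambda>i. if i \<in> G then -1 else 1) j * fs j z) *\<^sub>R f j)
            \<le> K * norm (\<Sum>j\<in>{1..L}. fs j z *\<^sub>R f j)"
        using KS unfolding S_def by (elim CollectE allE impE) auto
      then show "norm (flip G z) \<le> K * norm z" using expansion[of z] by (simp add: flip_def)
    qed
    define c0 where "c0 = 1 + (K-1)/2^N"
    have c01: "c0 \<ge> 1" using K1 by (simp add: c0_def)
    define GN where "GN = {i. (i-1) mod 2^(N+1) = (2::nat)^N}"
    have c0S2: "c0 \<in> S2" unfolding S2_def
    proof (intro CollectI allI impI)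
      fix a eps :: "nat \<Rightarrow> real" assume eps: "\<forall>j. eps j \<in> {-1, 1}"
      define x where "x = a 1 *\<^sub>R f 1 + a L *\<^sub>R f L"
      define x' where "x' = a 1 *\<^sub>R f 1 - a L *\<^sub>R f L"
      have sx: "(\<Sum>j\<in>{1, L}. a j *\<^sub>R f j) = x" using L1 by (simp add: x_def)
      have iL: "1 \<in> {1..L}" "L \<in> {1..L}" using L1 by auto
      have fsx: "fs i x = (if i = 1 then a 1 else 0) + (if i = L then a L else 0)" if "i \<in> {1..L}" for i
        using dual that iL unfolding x_def by (auto simp: blinfun.add_right blinfun.scaleR_right L_def)
      have fsx': "fs i x' = (if i = 1 then a 1 else 0) - (if i = L then a L else 0)" if "i \<in> {1..L}" for i
        using dual that iL unfolding x'_def by (auto simp: blinfun.diff_right blinfun.scaleR_right L_def)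
      have supp: "\<forall>i\<in>{1..L}. \<not> 2^N dvd (i-1) \<longrightarrow> fs i x = 0"
      proof (intro ballI impI)
        fix i assume i: "i \<in> {1..L}" and nd: "\<not> 2^N dvd (i-1)"
        then have "i \<noteq> 1" "i \<noteq> L" by (auto simp: L_def)
        then show "fs i x = 0" using fsx[OF i] by simp
      qed
      have "1 \<notin> GN" by (simp add: GN_def)
      moreover have "L \<in> GN" by (simp add: GN_def L_def)
      ultimately have fl: "flip GN x = x'"
        by (intro coord_eq) (auto simp: fs_flip fsx fsx' L1)
      have Bx: "norm x' \<le> c0 * norm x"
        using Bk[OF skip HK K1 supp] fl GN_def by (simp add: c0_def)
      show "norm (\<Sum>j\<in>{1, L}. (eps j * a j) *\<^sub>R f j) \<le> c0 * norm (\<Sum>j\<in>{1, L}. a j *\<^sub>R f j)"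
      proof -
        have e1: "eps 1 = 1 \<or> eps 1 = -1" and eL: "eps L = 1 \<or> eps L = -1" using eps by auto
        have ex: "(\<Sum>j\<in>{1, L}. (eps j * a j) *\<^sub>R f j) = (eps 1 * a 1) *\<^sub>R f 1 + (eps L * a L) *\<^sub>R f L"
          using L1 by simp
        have "norm ((eps 1 * a 1) *\<^sub>R f 1 + (eps L * a L) *\<^sub>R f L) \<le> c0 * norm x"
        proof -
          { assume "eps 1 = eps L"
            then have "(eps 1 * a 1) *\<^sub>R f 1 + (eps L * a L) *\<^sub>R f L = eps 1 *\<^sub>R x"
              by (simp add: x_def scaleR_add_right)
            moreover have "\<bar>eps 1\<bar> = 1" using e1 by auto
            moreover have "norm x \<le> c0 * norm x" using c01 by (simp add: mult_le_cancel_right1)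
            ultimately have ?thesis by simp }
          moreover
          { assume ne: "eps 1 \<noteq> eps L"
            then have "(eps 1 * a 1) *\<^sub>R f 1 + (eps L * a L) *\<^sub>R f L = eps 1 *\<^sub>R x'"
              using e1 eL by (auto simp: x'_def)
            moreover have "\<bar>eps 1\<bar> = 1" using e1 by auto
            ultimately have ?thesis using Bx by simp }
          ultimately show ?thesis by blast
        qed
        then show ?thesis using ex sx by simp
      qed
    qed
    have "bdd_below S2" using S2_ge1 by (intro bdd_belowI[of _ 1]) auto
    then have "\<mu> \<le> c0" using cInf_lower[OF c0S2] muS2 by simp
    then have "2^N * (\<mu> - 1) \<le> 2^N * (c0 - 1)" by simp
    also have "\<dots> = K - 1" by (simp add: c0_def)
    finally show ?thesis by simp
  qed
  have "1 + 2^N * (\<mu> - 1) \<le> Inf S" by (rule cInf_greatest[OF S_ne main])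
  then show ?thesis using ubcS by (simp add: L_def)
qed



end
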